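(* There exists a constant $C$ such that for all $\alpha\in\mathbb{R}$ and all real $z\geq 1$, \[ \int_0^1\sup_{x\geq 0}\left|\sum_{x<n\leq x+z}e\bigl(\alpha s_Z(n)+n\theta\bigr)\right|\,d\theta\leq C z^{1/2}. \] Moreover, for every $\alpha\in\mathbb{R}\setminus\mathbb{Z}$ there exist $\eta>0$ and $C_1$ such that for all $z\geq 1$, \[ \sup_{x\geq 0}\left|\sum_{x<n\leq x+z}e\bigl(\alpha s_Z(n)\bigr)\right|\leq C_1 z^{1-\eta}. \]
   Context: Let $F_0=0$, $F_1=1$, $F_k=F_{k-1}+F_{k-2}$ be the Fibonacci numbers. Every positive integer $n$ has a unique representation $n=\sum_{i\geq 2}\varepsilon_i(n)F_i$ with $\varepsilon_i(n)\in\{0,1\}$ and $\varepsilon_i(n)=1\Rightarrow\varepsilon_{i+1}(n)=0$ (Zeckendorf). The Zeckendorf sum-of-digits is $s_Z(n)=\sum_{i\geq 2}\varepsilon_i(n)$, with $s_Z(0)=0$. $e(x)=e^{2\pi i x}$; sums range over integers $n$ in the indicated interval. *)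

theory Defs
  imports "HOL-Analysis.Analysis"
begin

fun F :: "nat \<Rightarrow> nat" where
  "F 0 = 0"
| "F (Suc 0) = 1"
| "F (Suc (Suc k)) = F (Suc k) + F k"

text \<open>A Zeckendorf digit set for n: a finite set D of indices i \<ge> 2 (the positions with
  digit 1), no two consecutive, with n = sum of F i over D.\<close>
definition zeck_rep :: "nat \<Rightarrow> nat set \<Rightarrow> bool" where
  "zeck_rep n D \<longleftrightarrow> finite D \<and> (\<forall>i\<in>D. 2 \<le> i) \<and> (\<forall>i\<in>D. Suc i \<notin> D)
     \<and> n = (\<Sum>i\<in>D. F i)"

text \<open>Zeckendorf sum of digits: number of nonzero digits of the unique representation
  (for n = 0 the unique representation is the empty set, so s_Z 0 = 0).\<close>
definition sZ :: "nat \<Rightarrow> nat" where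
  "sZ n = card (THE D. zeck_rep n D)"

definition e :: "real \<Rightarrow> complex" where
  "e x = exp (2 * pi * \<i> * complex_of_real x)"

definition S :: "real \<Rightarrow> real \<Rightarrow> real \<Rightarrow> real \<Rightarrow> complex" where
  "S \<alpha> \<theta> x z = (\<Sum>n\<in>{n::nat. x < real n \<and> real n \<le> x + z}. e (\<alpha> * real (sZ n) + real n * \<theta>))"

end

theory Submission
  imports Defs
begin


lemma F_mono_Suc: "F n \<le> F (Suc n)"
  by (induction n rule: F.induct) auto

lemma F_mono: "m \<le> n \<Longrightarrow> F m \<le> F n"
  by (induction n rule: dec_induct) (auto intro: order_trans F_mono_Suc)

lemma F_pos: "n \<ge> 1 \<Longrightarrow> F n \<ge> 1"
proof -
  assume "n \<ge> 1"
  hence "F 1 \<le> F n" by (rule F_mono)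
  thus ?thesis by simp
qed

lemma F_ge: "F n + 1 \<ge> n"
proof (induction n rule: F.induct)
  case (3 k)
  thus ?case using F_pos[of k] by (cases "k = 0") auto
qed auto

definition valid :: "nat set \<Rightarrow> bool" where
  "valid D \<longleftrightarrow> finite D \<and> (\<forall>i\<in>D. 2 \<le> i) \<and> (\<forall>i\<in>D. Suc i \<notin> D)"

lemma zeck_rep_valid: "zeck_rep n D \<longleftrightarrow> valid D \<and> n = (\<Sum>i\<in>D. F i)"
  by (auto simp: zeck_rep_def valid_def)

lemma valid_subset: "valid D \<Longrightarrow> E \<subseteq> D \<Longrightarrow> valid E"
  unfolding valid_def by (auto intro: finite_subset)

lemma zsum_lt: "valid D \<Longrightarrow> D \<subseteq> {..<j} \<Longrightarrow> j \<ge> 1 \<Longrightarrow> (\<Sum>i\<in>D. F i) < F j"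
proof (induction j arbitrary: D rule: less_induct)
  case (less j)
  show ?case
  proof (cases "j - 1 \<in> D")
    case False
    have sub: "D \<subseteq> {..<j-1}"
    proof
      fix x assume "x \<in> D"
      hence "x < j" "x \<noteq> j - 1" using less.prems False by auto
      thus "x \<in> {..<j-1}" by simp
    qed
    show ?thesis
    proof (cases "j = 1")
      case True
      hence "D = {}" using sub by auto
      thus ?thesis using True by simp
    next
      case False
      hence "(\<Sum>i\<in>D. F i) < F (j-1)" using less.IH[of "j-1" D] less.prems sub by auto
      also have "\<dots> \<le> F j" by (rule F_mono) simp
      finally show ?thesis .
    qed
  next
    case True
    have j3: "j \<ge> 3" using True less.prems unfolding valid_def by force
    then obtain t where jt: "j = Suc (Suc (Suc t))" using le_Suc_ex[OF j3] by auto
    have T2: "Suc (Suc t) \<in> D" using True jt by simp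
    have nj2: "Suc t \<notin> D" using T2 less.prems unfolding valid_def by blast
    let ?E = "D - {Suc (Suc t)}"
    have vE: "valid ?E" using less.prems valid_subset by blast
    have subE: "?E \<subseteq> {..<Suc t}"
    proof
      fix x assume x: "x \<in> ?E"
      hence "x < Suc (Suc (Suc t))" "x \<noteq> Suc (Suc t)" "x \<noteq> Suc t" using less.prems(2) jt nj2 by auto
      thus "x \<in> {..<Suc t}" by simp
    qed
    have "(\<Sum>i\<in>?E. F i) < F (Suc t)" using less.IH[of "Suc t" ?E] vE subE jt by auto
    moreover have "(\<Sum>i\<in>D. F i) = F (Suc (Suc t)) + (\<Sum>i\<in>?E. F i)"
      using T2 less.prems(1) unfolding valid_def by (simp add: sum.remove)
    ultimately show ?thesis using jt by simp
  qed
qed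

lemma zrep_exists: "m < F j \<Longrightarrow> \<exists>D. zeck_rep m D \<and> D \<subseteq> {..<j}"
proof (induction j arbitrary: m rule: less_induct)
  case (less j)
  show ?case
  proof (cases "j \<le> 2")
    case True
    hence "m = 0" using less.prems by (cases j; cases "j - 1") auto
    thus ?thesis by (intro exI[of _ "{}"]) (auto simp: zeck_rep_def)
  next
    case False
    then obtain t0 where "j = Suc (Suc (Suc t0))" using le_Suc_ex[of 3 j] by auto
    then obtain t where jt: "j = Suc (Suc t)" and t1: "t \<ge> 1" by auto
    show ?thesis
    proof (cases "m < F (Suc t)")
      case True
      then obtain D where D: "zeck_rep m D" "D \<subseteq> {..<Suc t}" using less.IH[of "Suc t"] jt by auto
      have "D \<subseteq> {..<j}" using D(2) jt by (auto simp: subset_iff)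
      thus ?thesis using D by blast
    next
      case False
      define m' where "m' = m - F (Suc t)"
      have m': "m' < F t" using False less.prems jt m'_def by auto
      then obtain D where D: "zeck_rep m' D" "D \<subseteq> {..<t}" using less.IH[of t] jt by auto
      have nin: "Suc t \<notin> D" using D(2) by auto
      have fD: "finite D" using D(1) by (simp add: zeck_rep_def)
      have "m = F (Suc t) + m'" using False m'_def by simp
      hence "m = (\<Sum>i\<in>insert (Suc t) D. F i)" using D(1) fD nin by (simp add: zeck_rep_def)
      moreover have "valid (insert (Suc t) D)"
        using D t1 nin fD unfolding zeck_rep_def valid_def
        by (auto simp: subset_iff)
      ultimately have "zeck_rep m (insert (Suc t) D)" by (simp add: zeck_rep_valid)
      moreover have "insert (Suc t) D \<subseteq> {..<j}" using D jt by auto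
      ultimately show ?thesis by blast
    qed
  qed
qed

lemma zrep_unique_aux: "valid D \<Longrightarrow> valid E \<Longrightarrow> D \<subseteq> {..<j} \<Longrightarrow> E \<subseteq> {..<j} \<Longrightarrow>
   (\<Sum>i\<in>D. F i) = (\<Sum>i\<in>E. F i) \<Longrightarrow> D = E"
proof (induction j arbitrary: D E)
  case 0
  thus ?case by auto
next
  case (Suc j)
  have dD: "(\<Sum>i\<in>D. F i) = (if j \<in> D then F j + (\<Sum>i\<in>D-{j}. F i) else (\<Sum>i\<in>D-{j}. F i))"
    using Suc.prems(1) unfolding valid_def by (simp add: sum.remove)
  have dE: "(\<Sum>i\<in>E. F i) = (if j \<in> E then F j + (\<Sum>i\<in>E-{j}. F i) else (\<Sum>i\<in>E-{j}. F i))"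
    using Suc.prems(2) unfolding valid_def by (simp add: sum.remove)
  have vD: "valid (D-{j})" and vE: "valid (E-{j})" using Suc.prems valid_subset by blast+
  have sD: "D-{j} \<subseteq> {..<j}" and sE: "E-{j} \<subseteq> {..<j}" using Suc.prems by auto
  show ?case
  proof (cases "j \<in> D \<longleftrightarrow> j \<in> E")
    case True
    have "(\<Sum>i\<in>D-{j}. F i) = (\<Sum>i\<in>E-{j}. F i)"
    proof (cases "j \<in> D")
      case jD: True
      hence "j \<in> E" using True by blast
      thus ?thesis using dD dE Suc.prems(5) jD by simp
    next
      case jD: False
      hence "j \<notin> E" using True by blast
      hence "E - {j} = E" "D - {j} = D" using jD by auto
      thus ?thesis using Suc.prems(5) by simp
    qed
    hence "D - {j} = E - {j}" using Suc.IH[OF vD vE sD sE] by blast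
    show ?thesis
    proof (rule set_eqI)
      fix x show "x \<in> D \<longleftrightarrow> x \<in> E"
        using \<open>D - {j} = E - {j}\<close> True by (cases "x = j") (auto simp: set_eq_iff)
    qed
  next
    case False
    have contra: False if vX: "valid X" and vY: "valid Y" and jX: "j \<in> X" and jY: "j \<notin> Y"
        and sY: "Y \<subseteq> {..<Suc j}" and eq: "(\<Sum>i\<in>X. F i) = (\<Sum>i\<in>Y. F i)" for X Y
    proof -
      have j2: "j \<ge> 2" using vX jX unfolding valid_def by auto
      have "Y \<subseteq> {..<j}" using sY jY by (auto simp: subset_iff less_Suc_eq)
      hence "(\<Sum>i\<in>Y. F i) < F j" using zsum_lt vY j2 by auto
      moreover have "F j \<le> (\<Sum>i\<in>X. F i)" using vX jX unfolding valid_def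
        by (intro member_le_sum) auto
      ultimately show False using eq by simp
    qed
    show ?thesis
    proof (cases "j \<in> D")
      case True
      hence "j \<notin> E" using False by blast
      from contra[OF Suc.prems(1) Suc.prems(2) True this Suc.prems(4) Suc.prems(5)] show ?thesis ..
    next
      case nD: False
      hence "j \<in> E" using False by blast
      from contra[OF Suc.prems(2) Suc.prems(1) this nD Suc.prems(3) Suc.prems(5)[symmetric]] show ?thesis ..
    qed
  qed
qed

lemma zrep_unique: "zeck_rep n D \<Longrightarrow> zeck_rep n E \<Longrightarrow> D = E"
proof -
  assume a: "zeck_rep n D" "zeck_rep n E"
  hence fin: "finite (D \<union> E)" by (auto simp: zeck_rep_def)
  obtain j where "D \<union> E \<subseteq> {..<j}"
    using fin finite_nat_bounded by blast
  thus ?thesis using a zrep_unique_aux[of D E j] by (auto simp: zeck_rep_valid)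
qed

lemma sZ_eq: "zeck_rep n D \<Longrightarrow> sZ n = card D"
proof -
  assume a: "zeck_rep n D"
  have "(THE D. zeck_rep n D) = D" by (rule the_equality) (use a zrep_unique in blast)+
  thus ?thesis by (simp add: sZ_def)
qed

lemma sZ_shift: "m < F (Suc p) \<Longrightarrow> sZ (F (Suc (Suc p)) + m) = Suc (sZ m)"
proof -
  assume "m < F (Suc p)"
  then obtain D where D: "zeck_rep m D" "D \<subseteq> {..<Suc p}" using zrep_exists by blast
  have fin: "finite D" using D by (auto simp: zeck_rep_def)
  have nin: "Suc (Suc p) \<notin> D" using D by auto
  have "zeck_rep (F (Suc (Suc p)) + m) (insert (Suc (Suc p)) D)"
    using D fin nin unfolding zeck_rep_def by (auto simp: subset_iff)
  hence "sZ (F (Suc (Suc p)) + m) = card (insert (Suc (Suc p)) D)" by (rule sZ_eq)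
  also have "\<dots> = Suc (card D)" using fin nin by simp
  finally show ?thesis using sZ_eq[OF D(1)] by simp
qed



lemma F_SS: "F (Suc (Suc k)) = F (Suc k) + F k" by simp
declare F.simps(3)[simp del]

lemma e_add: "e (a + b) = e a * e b"
proof -
  have "2 * pi * \<i> * complex_of_real (a + b) = 2 * pi * \<i> * complex_of_real a + 2 * pi * \<i> * complex_of_real b"
    by (simp add: algebra_simps)
  thus ?thesis unfolding e_def by (simp add: exp_add)
qed

lemma norm_e [simp]: "cmod (e a) = 1"
  by (simp add: e_def norm_exp_eq_Re)

definition ff :: "real \<Rightarrow> real \<Rightarrow> nat \<Rightarrow> complex" where
  "ff \<alpha> \<theta> n = e (\<alpha> * real (sZ n) + real n * \<theta>)"

definition W :: "real \<Rightarrow> real \<Rightarrow> nat \<Rightarrow> nat \<Rightarrow> complex" where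
  "W \<alpha> \<theta> lo hi = (\<Sum>n\<in>{lo..<hi}. ff \<alpha> \<theta> n)"

definition G :: "real \<Rightarrow> real \<Rightarrow> nat \<Rightarrow> complex" where
  "G \<alpha> \<theta> j = W \<alpha> \<theta> 0 (F j)"

definition A :: "real \<Rightarrow> real \<Rightarrow> nat \<Rightarrow> real" where
  "A \<alpha> \<theta> k = (\<Sum>i\<le>k. cmod (G \<alpha> \<theta> i))"

lemma A_nonneg: "A \<alpha> \<theta> k \<ge> 0"
  unfolding A_def by (simp add: sum_nonneg)

lemma A_mono: "k \<le> k' \<Longrightarrow> A \<alpha> \<theta> k \<le> A \<alpha> \<theta> k'"
  unfolding A_def by (intro sum_mono2) auto

lemma G_le_A: "i \<le> k \<Longrightarrow> cmod (G \<alpha> \<theta> i) \<le> A \<alpha> \<theta> k"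
  unfolding A_def by (rule member_le_sum) auto

lemma A_Suc: "A \<alpha> \<theta> (Suc k) = A \<alpha> \<theta> k + cmod (G \<alpha> \<theta> (Suc k))"
  unfolding A_def by simp

lemma ff_shift: "m < F (Suc p) \<Longrightarrow>
  ff \<alpha> \<theta> (F (Suc (Suc p)) + m) = e (\<alpha> + real (F (Suc (Suc p))) * \<theta>) * ff \<alpha> \<theta> m"
proof -
  assume m: "m < F (Suc p)"
  have "\<alpha> * real (sZ (F (Suc (Suc p)) + m)) + real (F (Suc (Suc p)) + m) * \<theta>
        = (\<alpha> + real (F (Suc (Suc p))) * \<theta>) + (\<alpha> * real (sZ m) + real m * \<theta>)"
    using sZ_shift[OF m] by (simp add: algebra_simps)
  thus ?thesis unfolding ff_def by (simp add: e_add)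
qed

lemma W_split: "lo \<le> mid \<Longrightarrow> mid \<le> hi \<Longrightarrow> W \<alpha> \<theta> lo hi = W \<alpha> \<theta> lo mid + W \<alpha> \<theta> mid hi"
  unfolding W_def by (simp add: sum.atLeastLessThan_concat)

lemma W_shift: "hi \<le> F (Suc p) \<Longrightarrow>
  W \<alpha> \<theta> (F (Suc (Suc p)) + lo) (F (Suc (Suc p)) + hi) = e (\<alpha> + real (F (Suc (Suc p))) * \<theta>) * W \<alpha> \<theta> lo hi"
proof -
  assume hi: "hi \<le> F (Suc p)"
  let ?q = "F (Suc (Suc p))"
  have "W \<alpha> \<theta> (?q + lo) (?q + hi) = (\<Sum>n\<in>{lo..<hi}. ff \<alpha> \<theta> (n + ?q))"
    unfolding W_def using sum.shift_bounds_nat_ivl[of "ff \<alpha> \<theta>" lo ?q hi] by (simp add: add.commute)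
  also have "\<dots> = (\<Sum>n\<in>{lo..<hi}. e (\<alpha> + real ?q * \<theta>) * ff \<alpha> \<theta> n)"
  proof (intro sum.cong refl)
    fix n assume "n \<in> {lo..<hi}"
    hence "n < F (Suc p)" using hi by auto
    thus "ff \<alpha> \<theta> (n + ?q) = e (\<alpha> + real ?q * \<theta>) * ff \<alpha> \<theta> n"
      using ff_shift[of n p \<alpha> \<theta>] by (simp add: add.commute)
  qed
  also have "\<dots> = e (\<alpha> + real ?q * \<theta>) * W \<alpha> \<theta> lo hi"
    unfolding W_def by (simp add: sum_distrib_left)
  finally show ?thesis .
qed

lemma W_shift_norm: "hi \<le> F (Suc p) \<Longrightarrow>
  cmod (W \<alpha> \<theta> (F (Suc (Suc p)) + lo) (F (Suc (Suc p)) + hi)) = cmod (W \<alpha> \<theta> lo hi)"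
  by (simp add: W_shift norm_mult)

lemma prefix_bound: "t \<le> F j \<Longrightarrow> cmod (W \<alpha> \<theta> 0 t) \<le> A \<alpha> \<theta> j"
proof (induction j arbitrary: t rule: less_induct)
  case (less j)
  show ?case
  proof (cases "t = F j")
    case True
    thus ?thesis using G_le_A[of j j] by (simp add: G_def)
  next
    case tne: False
    show ?thesis
    proof (cases "j \<le> 2")
      case True
      hence "t = 0 \<or> t = F j" using less.prems F_SS[of 0] by (cases j; cases "j - 1"; auto)
      thus ?thesis using tne A_nonneg by (auto simp: W_def)
    next
      case False
      then obtain q where jq: "j = Suc (Suc (Suc q))" using le_Suc_ex[of 3 j] by auto
      show ?thesis
      proof (cases "t \<le> F (Suc (Suc q))")
        case True
        hence "cmod (W \<alpha> \<theta> 0 t) \<le> A \<alpha> \<theta> (Suc (Suc q))" using less.IH jq by auto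
        also have "\<dots> \<le> A \<alpha> \<theta> j" using jq by (intro A_mono) auto
        finally show ?thesis .
      next
        case False
        define t' where "t' = t - F (Suc (Suc q))"
        have t': "t' \<le> F (Suc q)" using less.prems jq t'_def F_SS[of "Suc q"] by auto
        have tt: "t = F (Suc (Suc q)) + t'" using False t'_def by auto
        have "W \<alpha> \<theta> 0 t = W \<alpha> \<theta> 0 (F (Suc (Suc q))) + W \<alpha> \<theta> (F (Suc (Suc q)) + 0) (F (Suc (Suc q)) + t')"
          using tt W_split[of 0 "F (Suc (Suc q))" t] by simp
        hence "cmod (W \<alpha> \<theta> 0 t) \<le> cmod (W \<alpha> \<theta> 0 (F (Suc (Suc q)))) + cmod (W \<alpha> \<theta> (F (Suc (Suc q)) + 0) (F (Suc (Suc q)) + t'))"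
          by (metis norm_triangle_ineq)
        also have "\<dots> = cmod (G \<alpha> \<theta> (Suc (Suc q))) + cmod (W \<alpha> \<theta> 0 t')"
          using W_shift_norm[OF t', of \<alpha> \<theta> 0] by (simp add: G_def)
        also have "\<dots> \<le> cmod (G \<alpha> \<theta> (Suc (Suc q))) + A \<alpha> \<theta> (Suc q)"
          using less.IH[of "Suc q" t'] t' jq by auto
        also have "\<dots> \<le> A \<alpha> \<theta> j" using jq A_Suc[of \<alpha> \<theta> "Suc q"] A_Suc[of \<alpha> \<theta> "Suc (Suc q)"] by simp
        finally show ?thesis .
      qed
    qed
  qed
qed

lemma W_diff: "lo \<le> hi \<Longrightarrow> W \<alpha> \<theta> lo hi = W \<alpha> \<theta> 0 hi - W \<alpha> \<theta> 0 lo"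
  using W_split[of 0 lo hi] by simp

lemma suffix_bound: "s \<le> F k \<Longrightarrow> s \<le> F i \<Longrightarrow> cmod (W \<alpha> \<theta> (F i - s) (F i)) \<le> 2 * A \<alpha> \<theta> (k + 2)"
proof (induction i rule: less_induct)
  case (less i)
  show ?case
  proof (cases "i \<le> k + 2")
    case True
    have "cmod (W \<alpha> \<theta> (F i - s) (F i)) \<le> cmod (W \<alpha> \<theta> 0 (F i)) + cmod (W \<alpha> \<theta> 0 (F i - s))"
      using W_diff[of "F i - s" "F i"] norm_triangle_ineq4 by simp
    also have "\<dots> \<le> A \<alpha> \<theta> i + A \<alpha> \<theta> i"
      by (intro add_mono prefix_bound) auto
    also have "\<dots> \<le> 2 * A \<alpha> \<theta> (k + 2)" using A_mono[OF True] by simp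
    finally show ?thesis .
  next
    case False
    then obtain q where iq: "i = Suc (Suc (Suc q))" and kq: "k \<le> q" using le_Suc_ex[of "k+3" i] by auto
    have sq: "s \<le> F (Suc q)" using less.prems(1) F_mono[of k "Suc q"] kq by auto
    have "F i - s = F (Suc (Suc q)) + (F (Suc q) - s)" "F i = F (Suc (Suc q)) + F (Suc q)"
      using iq sq F_SS[of "Suc q"] by auto
    hence "cmod (W \<alpha> \<theta> (F i - s) (F i)) = cmod (W \<alpha> \<theta> (F (Suc q) - s) (F (Suc q)))"
      using W_shift_norm[of "F (Suc q)" q] by simp
    also have "\<dots> \<le> 2 * A \<alpha> \<theta> (k + 2)" using less.IH[of "Suc q"] iq sq less.prems(1) by auto
    finally show ?thesis .
  qed
qed

lemma interval_bound: "lo \<le> hi \<Longrightarrow> hi \<le> F j \<Longrightarrow> hi - lo \<le> F k \<Longrightarrow> cmod (W \<alpha> \<theta> lo hi) \<le> 3 * A \<alpha> \<theta> (k + 2)"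
proof (induction j arbitrary: lo hi rule: less_induct)
  case (less j)
  show ?case
  proof (cases "j \<le> k + 2")
    case True
    have "cmod (W \<alpha> \<theta> lo hi) \<le> cmod (W \<alpha> \<theta> 0 hi) + cmod (W \<alpha> \<theta> 0 lo)"
      using W_diff[OF less.prems(1)] norm_triangle_ineq4 by simp
    also have "\<dots> \<le> A \<alpha> \<theta> j + A \<alpha> \<theta> j"
      using less.prems by (intro add_mono prefix_bound) auto
    also have "\<dots> \<le> 3 * A \<alpha> \<theta> (k + 2)" using A_mono[OF True, of \<alpha> \<theta>] A_nonneg[of \<alpha> \<theta> "k+2"] by simp
    finally show ?thesis .
  next
    case False
    then obtain q where jq: "j = Suc (Suc (Suc q))" and kq: "k \<le> q" using le_Suc_ex[of "k+3" j] by auto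
    let ?a = "F (Suc (Suc q))"
    show ?thesis
    proof (cases "hi \<le> ?a")
      case True
      thus ?thesis using less.IH[of "Suc (Suc q)" lo hi] less.prems jq by auto
    next
      case hiF: False
      show ?thesis
      proof (cases "lo \<ge> ?a")
        case True
        define lo' hi' where "lo' = lo - ?a" and "hi' = hi - ?a"
        have e1: "lo = ?a + lo'" "hi = ?a + hi'" using True hiF lo'_def hi'_def by auto
        have h': "hi' \<le> F (Suc q)" using less.prems(2) jq hi'_def F_SS[of "Suc q"] by auto
        have "cmod (W \<alpha> \<theta> lo hi) = cmod (W \<alpha> \<theta> lo' hi')"
          using e1 W_shift_norm[OF h', of \<alpha> \<theta> lo'] by simp
        also have "\<dots> \<le> 3 * A \<alpha> \<theta> (k + 2)"
          using less.IH[of "Suc q" lo' hi'] less.prems e1 h' jq by auto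
        finally show ?thesis .
      next
        case loF: False
        define t where "t = hi - ?a"
        have tk: "t \<le> F k" using less.prems loF t_def by auto
        have tq: "t \<le> F (Suc q)" using tk F_mono[of k "Suc q"] kq by auto
        have "W \<alpha> \<theta> lo hi = W \<alpha> \<theta> (?a - (?a - lo)) ?a + W \<alpha> \<theta> (?a + 0) (?a + t)"
          using W_split[of lo ?a hi] loF hiF t_def by simp
        hence "cmod (W \<alpha> \<theta> lo hi) \<le> cmod (W \<alpha> \<theta> (?a - (?a - lo)) ?a) + cmod (W \<alpha> \<theta> (?a + 0) (?a + t))"
          by (metis norm_triangle_ineq)
        also have "\<dots> = cmod (W \<alpha> \<theta> (?a - (?a - lo)) ?a) + cmod (W \<alpha> \<theta> 0 t)"
          using W_shift_norm[OF tq, of \<alpha> \<theta> 0] by simp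
        also have "\<dots> \<le> 2 * A \<alpha> \<theta> (k + 2) + A \<alpha> \<theta> k"
          using less.prems loF hiF tk by (intro add_mono suffix_bound prefix_bound) auto
        also have "\<dots> \<le> 3 * A \<alpha> \<theta> (k + 2)" using A_mono[of k "k+2" \<alpha> \<theta>] by simp
        finally show ?thesis .
      qed
    qed
  qed
qed

lemma S_set: "x \<ge> 0 \<Longrightarrow> z \<ge> 0 \<Longrightarrow>
  {n::nat. x < real n \<and> real n \<le> x + z} = {nat \<lfloor>x\<rfloor> + 1..<nat \<lfloor>x + z\<rfloor> + 1}"
proof (intro set_eqI iffI)
  fix n assume x: "x \<ge> 0" "z \<ge> 0"
  { assume "n \<in> {n::nat. x < real n \<and> real n \<le> x + z}"
    hence a: "x < real n" "real n \<le> x + z" by auto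
    have "\<lfloor>x\<rfloor> < int n" using a(1) by (simp add: floor_less_iff)
    moreover have "int n \<le> \<lfloor>x + z\<rfloor>" using a(2) by (simp add: le_floor_iff)
    ultimately have "nat \<lfloor>x\<rfloor> < n" "n < nat \<lfloor>x + z\<rfloor> + 1" using x by (auto simp: nat_less_iff)
    thus "n \<in> {nat \<lfloor>x\<rfloor> + 1..<nat \<lfloor>x + z\<rfloor> + 1}" by auto }
  { assume "n \<in> {nat \<lfloor>x\<rfloor> + 1..<nat \<lfloor>x + z\<rfloor> + 1}"
    hence "\<lfloor>x\<rfloor> < int n" "int n \<le> \<lfloor>x + z\<rfloor>" using x by auto
    thus "n \<in> {n::nat. x < real n \<and> real n \<le> x + z}"
      by (auto simp: floor_less_iff le_floor_iff) }
qed

lemma S_eq_W: "x \<ge> 0 \<Longrightarrow> z \<ge> 0 \<Longrightarrow> S \<alpha> \<theta> x z = W \<alpha> \<theta> (nat \<lfloor>x\<rfloor> + 1) (nat \<lfloor>x + z\<rfloor> + 1)"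
  unfolding S_def W_def ff_def using S_set by simp

lemma S_bound: "x \<ge> 0 \<Longrightarrow> z \<ge> 0 \<Longrightarrow> z + 1 \<le> real (F k) \<Longrightarrow> cmod (S \<alpha> \<theta> x z) \<le> 3 * A \<alpha> \<theta> (k + 2)"
proof -
  assume x: "x \<ge> 0" and z: "z \<ge> 0" and k: "z + 1 \<le> real (F k)"
  define lo where "lo = nat \<lfloor>x\<rfloor> + 1"
  define hi where "hi = nat \<lfloor>x + z\<rfloor> + 1"
  have fl: "\<lfloor>x\<rfloor> \<le> \<lfloor>x + z\<rfloor>" using z by (intro floor_mono) simp
  have lh: "lo \<le> hi" using fl x unfolding lo_def hi_def by auto
  have "real_of_int \<lfloor>x + z\<rfloor> \<le> x + z" by simp
  moreover have "x < real_of_int \<lfloor>x\<rfloor> + 1" by linarith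
  ultimately have "real_of_int (\<lfloor>x + z\<rfloor> - \<lfloor>x\<rfloor>) < z + 1" by (simp only: of_int_diff)
  hence "real (hi - lo) < z + 1" using x z fl unfolding lo_def hi_def by (simp add: of_nat_diff)
  hence hk: "hi - lo \<le> F k" using k by linarith
  have hj: "hi \<le> F (hi + 1)" using F_ge[of "hi + 1"] by simp
  have "cmod (S \<alpha> \<theta> x z) = cmod (W \<alpha> \<theta> lo hi)" using S_eq_W[OF x z] lo_def hi_def by simp
  also have "\<dots> \<le> 3 * A \<alpha> \<theta> (k + 2)" by (rule interval_bound[OF lh hj hk])
  finally show ?thesis .
qed

lemma SUP_bound: "z \<ge> 0 \<Longrightarrow> z + 1 \<le> real (F k) \<Longrightarrow>
   (SUP x\<in>{0::real..}. cmod (S \<alpha> \<theta> x z)) \<le> 3 * A \<alpha> \<theta> (k + 2)"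
  by (rule cSUP_least) (use S_bound[of _ z k \<alpha> \<theta>] in auto)



lemma has_integral_e_nz:
  fixes k :: int assumes k: "k \<noteq> 0"
  shows "((\<lambda>\<theta>. e (c + real_of_int k * \<theta>)) has_integral 0) {0..1}"
proof -
  define a where "a = 2 * pi * \<i> * complex_of_int k"
  have a0: "a \<noteq> 0" using k by (simp add: a_def)
  have "\<And>t. t \<in> {0..1} \<Longrightarrow> ((\<lambda>x. exp (a * x) / a) has_vector_derivative exp (a * t)) (at t within {0..1})"
    using a0
    by (intro derivative_eq_intros has_complex_derivative_imp_has_vector_derivative [unfolded o_def] | simp)+
  then have "((\<lambda>t. exp(a * of_real t)) has_integral exp(a * complex_of_real 1)/a - exp(a * of_real 0)/a)  {0..1}"
    by (meson fundamental_theorem_of_calculus zero_le_one)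
  moreover have "exp (a * complex_of_real 1) = 1"
  proof -
    have "a * complex_of_real 1 = 0 + \<i> * (of_int k * (of_real pi * 2))" by (simp add: a_def algebra_simps)
    thus ?thesis using exp_plus_2pin[of 0 k] by simp
  qed
  ultimately have h: "((\<lambda>t. exp(a * of_real t)) has_integral 0) {0..1}" by simp
  have eq: "e (c + real_of_int k * t) = e c * exp (a * of_real t)" for t
    unfolding e_add by (simp add: e_def a_def algebra_simps)
  show ?thesis using has_integral_mult_right[OF h, of "e c"] by (simp add: eq)
qed

lemma has_integral_e:
  fixes k :: int
  shows "((\<lambda>\<theta>. e (c + real_of_int k * \<theta>)) has_integral (if k = 0 then e c else 0)) {0..1}"
proof (cases "k = 0")
  case True
  thus ?thesis using has_integral_const_real[of "e c" 0 1] by simp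
next
  case False
  thus ?thesis using has_integral_e_nz by simp
qed

lemma cnj_e: "cnj (e x) = e (- x)"
  by (simp add: e_def exp_cnj)

lemma ff_cnj: "ff \<alpha> \<theta> n * cnj (ff \<alpha> \<theta> m) =
   e (\<alpha> * (real (sZ n) - real (sZ m)) + real_of_int (int n - int m) * \<theta>)"
proof -
  have "ff \<alpha> \<theta> n * cnj (ff \<alpha> \<theta> m) = e ((\<alpha> * real (sZ n) + real n * \<theta>) + - (\<alpha> * real (sZ m) + real m * \<theta>))"
    unfolding ff_def cnj_e by (simp only: e_add[symmetric])
  also have "(\<alpha> * real (sZ n) + real n * \<theta>) + - (\<alpha> * real (sZ m) + real m * \<theta>)
     = \<alpha> * (real (sZ n) - real (sZ m)) + real_of_int (int n - int m) * \<theta>"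
    by (simp add: algebra_simps)
  finally show ?thesis .
qed

lemma G_sq_complex: "((\<lambda>\<theta>. G \<alpha> \<theta> j * cnj (G \<alpha> \<theta> j)) has_integral of_nat (F j)) {0..1}"
proof -
  let ?N = "{0..<F j}"
  have eq: "G \<alpha> \<theta> j * cnj (G \<alpha> \<theta> j) = (\<Sum>n\<in>?N. \<Sum>m\<in>?N.
      e (\<alpha> * (real (sZ n) - real (sZ m)) + real_of_int (int n - int m) * \<theta>))" for \<theta>
    unfolding G_def W_def cnj_sum sum_product ff_cnj ..
  have "((\<lambda>\<theta>. \<Sum>n\<in>?N. \<Sum>m\<in>?N. e (\<alpha> * (real (sZ n) - real (sZ m)) + real_of_int (int n - int m) * \<theta>))
      has_integral (\<Sum>n\<in>?N. \<Sum>m\<in>?N. (if int n - int m = 0 then e (\<alpha> * (real (sZ n) - real (sZ m))) else 0))) {0..1}"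
    by (intro has_integral_sum finite_atLeastLessThan has_integral_e)
  also have "(\<Sum>n\<in>?N. \<Sum>m\<in>?N. (if int n - int m = 0 then e (\<alpha> * (real (sZ n) - real (sZ m))) else 0))
      = (\<Sum>n\<in>?N. \<Sum>m\<in>?N. (if n = m then 1 else 0))"
    by (intro sum.cong refl) (auto simp: e_def)
  also have "\<dots> = of_nat (F j)" by simp
  finally show ?thesis by (simp add: eq)
qed

lemma G_sq: "((\<lambda>\<theta>. (cmod (G \<alpha> \<theta> j))\<^sup>2) has_integral real (F j)) {0..1}"
proof -
  have h: "((\<lambda>\<theta>. complex_of_real ((cmod (G \<alpha> \<theta> j))\<^sup>2)) has_integral of_nat (F j)) {0..1}"
    using G_sq_complex[of \<alpha> j] unfolding complex_norm_square[symmetric] .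
  from has_integral_linear[OF h bounded_linear_Re] show ?thesis by (simp add: o_def)
qed

lemma G_cont: "continuous_on T (\<lambda>\<theta>. G \<alpha> \<theta> j)"
  unfolding G_def W_def ff_def e_def by (intro continuous_intros)

lemma normG_integrable: "(\<lambda>\<theta>. cmod (G \<alpha> \<theta> j)) integrable_on {0..1}"
  by (intro integrable_continuous_interval continuous_intros G_cont)

lemma int_normG: "integral {0..1} (\<lambda>\<theta>. cmod (G \<alpha> \<theta> j)) \<le> sqrt (real (F j))"
proof (cases "j = 0")
  case True
  thus ?thesis by (simp add: G_def W_def)
next
  case False
  define l where "l = sqrt (real (F j))"
  have l0: "l > 0" using F_pos[of j] False by (simp add: l_def)
  have pw: "cmod (G \<alpha> \<theta> j) \<le> ((cmod (G \<alpha> \<theta> j))\<^sup>2 / l + l) / 2" for \<theta>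
  proof -
    have "0 \<le> (cmod (G \<alpha> \<theta> j) - l)\<^sup>2" by simp
    hence "2 * l * cmod (G \<alpha> \<theta> j) \<le> (cmod (G \<alpha> \<theta> j))\<^sup>2 + l\<^sup>2" by (simp add: power2_eq_square algebra_simps)
    thus ?thesis using l0 by (simp add: field_simps power2_eq_square)
  qed
  have hi: "((\<lambda>\<theta>. ((cmod (G \<alpha> \<theta> j))\<^sup>2 / l + l) / 2) has_integral ((real (F j) / l + l) / 2)) {0..1}"
  proof -
    have c: "((\<lambda>x::real. l) has_integral l) {0..1::real}" using has_integral_const_real[of l 0 1] by simp
    have "((\<lambda>\<theta>. (cmod (G \<alpha> \<theta> j))\<^sup>2 / l + l) has_integral (real (F j) / l + l)) {0..1}"
      by (intro has_integral_add has_integral_divide G_sq c)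
    from has_integral_divide[OF this, of 2] show ?thesis by simp
  qed
  have "integral {0..1} (\<lambda>\<theta>. cmod (G \<alpha> \<theta> j)) \<le> (real (F j) / l + l) / 2"
    using integral_le[OF normG_integrable has_integral_integrable[OF hi]] pw integral_unique[OF hi] by simp
  also have "\<dots> = l" using l0 by (simp add: l_def field_simps)
  finally show ?thesis by (simp add: l_def)
qed



lemma A_cont: "continuous_on T (\<lambda>\<theta>. A \<alpha> \<theta> k)"
  unfolding A_def by (intro continuous_intros G_cont)

lemma A_integrable: "(\<lambda>\<theta>. A \<alpha> \<theta> k) integrable_on {0..1}"
  by (intro integrable_continuous_interval A_cont)

lemma int_A: "integral {0..1} (\<lambda>\<theta>. A \<alpha> \<theta> k) \<le> (\<Sum>i\<le>k. sqrt (real (F i)))"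
proof -
  have "integral {0..1} (\<lambda>\<theta>. A \<alpha> \<theta> k) = (\<Sum>i\<le>k. integral {0..1} (\<lambda>\<theta>. cmod (G \<alpha> \<theta> i)))"
    unfolding A_def by (intro integral_sum) (auto intro: normG_integrable)
  also have "\<dots> \<le> (\<Sum>i\<le>k. sqrt (real (F i)))" by (intro sum_mono int_normG)
  finally show ?thesis .
qed

lemma F_double: "2 * F m \<le> F (Suc (Suc m))"
  using F_mono_Suc[of m] by (simp add: F_SS)

lemma sqrtF_sum: "(\<Sum>i\<le>m. sqrt (real (F i))) \<le> 6 * sqrt (real (F (m + 2)))"
proof (induction m rule: less_induct)
  case (less m)
  show ?case
  proof (cases "m < 2")
    case True
    hence "m = 0 \<or> m = 1" by auto
    moreover have "F 3 = 2" by (simp add: numeral_3_eq_3 F_SS)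
    moreover have "(1::real) \<le> 6 * sqrt 2"
    proof -
      have "1 \<le> sqrt (2::real)" by simp
      thus ?thesis by linarith
    qed
    ultimately show ?thesis by (auto simp: numeral_2_eq_2 F_SS)
  next
    case False
    then obtain n where mn: "m = Suc (Suc n)" using le_Suc_ex[of 2 m] by auto
    have s: "(\<Sum>i\<le>m. sqrt (real (F i))) = (\<Sum>i\<le>n. sqrt (real (F i))) + sqrt (real (F (Suc n))) + sqrt (real (F (Suc (Suc n))))"
      using mn by simp
    have ih: "(\<Sum>i\<le>n. sqrt (real (F i))) \<le> 6 * sqrt (real (F (Suc (Suc n))))" using less.IH[of n] mn by simp
    have mo: "sqrt (real (F (Suc n))) \<le> sqrt (real (F (Suc (Suc n))))" using F_mono_Suc by simp
    have d: "2 * real (F (Suc (Suc n))) \<le> real (F (m + 2))"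
      using F_double[of "Suc (Suc n)"] mn by simp
    have "8 * sqrt (real (F (Suc (Suc n)))) = sqrt (64 * real (F (Suc (Suc n))))"
      by (simp add: real_sqrt_mult)
    also have "\<dots> \<le> sqrt (36 * real (F (m + 2)))" using d by simp
    also have "\<dots> = 6 * sqrt (real (F (m + 2)))" by (simp add: real_sqrt_mult)
    finally show ?thesis using s ih mo by linarith
  qed
qed

lemma choose_k: "z \<ge> 1 \<Longrightarrow> \<exists>k'. real (F k') < z + 1 \<and> z + 1 \<le> real (F (Suc k')) \<and> k' \<ge> 1"
proof -
  assume z: "z \<ge> 1"
  define n where "n = nat \<lceil>z\<rceil> + 2"
  have "z + 1 \<le> real (F n)" using F_ge[of n] unfolding n_def by linarith
  hence ex: "\<exists>k. z + 1 \<le> real (F k)" by blast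
  define k where "k = (LEAST k. z + 1 \<le> real (F k))"
  have k: "z + 1 \<le> real (F k)" unfolding k_def using LeastI_ex[OF ex] .
  have k0: "k \<noteq> 0"
  proof
    assume "k = 0" with k z show False by simp
  qed
  then obtain k' where kk: "k = Suc k'" by (cases k) auto
  have "\<not> z + 1 \<le> real (F k')" using not_less_Least[of k' "\<lambda>k. z + 1 \<le> real (F k)"] kk k_def by simp
  moreover have "k' \<noteq> 0"
  proof
    assume "k' = 0" with k kk z show False by simp
  qed
  ultimately show ?thesis using k kk by (intro exI[of _ k']) auto
qed

lemma F_growth5: "k' \<ge> 1 \<Longrightarrow> F (k' + 5) \<le> 13 * F k'"
proof -
  assume "k' \<ge> 1"
  then obtain t where kt: "k' = Suc t" by (cases k') auto
  have "F (Suc k') \<le> 2 * F k'" using F_mono_Suc[of t] kt by (simp add: F_SS)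
  thus ?thesis by (simp add: F_SS numeral_eq_Suc)
qed

lemma SUP_integrable_bound:
  assumes z: "z \<ge> 1"
  shows "(\<lambda>\<theta>. SUP x\<in>{0::real..}. cmod (S \<alpha> \<theta> x z)) integrable_on {0..1} \<and>
        integral {0..1} (\<lambda>\<theta>. SUP x\<in>{0::real..}. cmod (S \<alpha> \<theta> x z)) \<le> 108 * sqrt z"
proof -
  obtain k' where k': "real (F k') < z + 1" "z + 1 \<le> real (F (Suc k'))" "k' \<ge> 1" using choose_k[OF z] by blast
  define k where "k = Suc k'"
  let ?H = "\<lambda>\<theta>. SUP x\<in>{0::real..}. cmod (S \<alpha> \<theta> x z)"
  define K where "K = k + 2"
  let ?g = "\<lambda>\<theta>. 3 * A \<alpha> \<theta> K"
  define \<phi> where "\<phi> x = (nat \<lfloor>x\<rfloor> + 1, nat \<lfloor>x + z\<rfloor> + 1)" for x :: real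
  define I where "I = \<phi> ` {0..}"
  have z0: "z \<ge> 0" using z by simp
  have kz: "z + 1 \<le> real (F k)" using k' k_def by simp
  have Sb: "cmod (S \<alpha> \<theta> x z) \<le> ?g \<theta>" if "x \<ge> 0" for x \<theta> using S_bound[OF that z0 kz] K_def by simp
  have SW: "S \<alpha> \<theta> x z = W \<alpha> \<theta> (fst (\<phi> x)) (snd (\<phi> x))" if "x \<ge> 0" for x \<theta>
    using S_eq_W[OF that z0] by (simp add: \<phi>_def)
  have Heq: "?H \<theta> = (SUP p\<in>I. cmod (W \<alpha> \<theta> (fst p) (snd p)))" for \<theta>
  proof -
    have "?H \<theta> = (SUP x\<in>{0::real..}. cmod (W \<alpha> \<theta> (fst (\<phi> x)) (snd (\<phi> x))))"
      by (intro SUP_cong refl) (simp add: SW)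
    also have "\<dots> = (SUP p\<in>I. cmod (W \<alpha> \<theta> (fst p) (snd p)))" unfolding I_def by (simp add: image_image)
    finally show ?thesis .
  qed
  have bddI: "bdd_above ((\<lambda>p. cmod (W \<alpha> \<theta> (fst p) (snd p))) ` I)" for \<theta>
    unfolding I_def by (rule bdd_aboveI[of _ "?g \<theta>"]) (auto simp: SW[symmetric] Sb)
  have bddS: "bdd_above ((\<lambda>x. cmod (S \<alpha> \<theta> x z)) ` {0..})" for \<theta>
    by (rule bdd_aboveI[of _ "?g \<theta>"]) (auto simp: Sb)
  have meas: "?H \<in> borel_measurable (lebesgue_on {0..1})"
  proof -
    have "(\<lambda>\<theta>. SUP p\<in>I. cmod (W \<alpha> \<theta> (fst p) (snd p))) \<in> borel_measurable (lebesgue_on {0..1})"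
    proof (rule borel_measurable_cSUP)
      show "countable I" by (rule countableI_type)
      fix p assume "p \<in> I"
      have "continuous_on {0..1} (\<lambda>\<theta>. cmod (W \<alpha> \<theta> (fst p) (snd p)))"
        unfolding W_def ff_def e_def by (intro continuous_intros)
      thus "(\<lambda>\<theta>. cmod (W \<alpha> \<theta> (fst p) (snd p))) \<in> borel_measurable (lebesgue_on {0..1})"
        by (intro continuous_imp_measurable_on_sets_lebesgue) auto
    next
      fix \<theta> show "bdd_above ((\<lambda>p. cmod (W \<alpha> \<theta> (fst p) (snd p))) ` I)" by (rule bddI)
    qed
    thus ?thesis by (simp add: Heq)
  qed
  have Hnn: "0 \<le> ?H \<theta>" for \<theta>
    using cSUP_upper2[OF bddS[of \<theta>], of 0 0] by simp
  have Hle: "?H \<theta> \<le> ?g \<theta>" for \<theta>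
    by (rule cSUP_least) (auto simp: Sb)
  have gint: "?g integrable_on {0..1}" by (intro integrable_continuous_interval continuous_intros A_cont)
  have Hint: "?H integrable_on {0..1}"
    by (rule measurable_bounded_by_integrable_imp_integrable_real[OF meas gint]) (auto simp: Hnn Hle)
  have "integral {0..1} ?H \<le> integral {0..1} ?g"
    by (rule integral_le[OF Hint gint]) (simp add: Hle)
  also have "\<dots> = 3 * integral {0..1} (\<lambda>\<theta>. A \<alpha> \<theta> K)" by simp
  also have "\<dots> \<le> 3 * (6 * sqrt (real (F (k + 4))))"
  proof -
    have K2: "K + 2 = k + 4" using K_def by simp
    show ?thesis using int_A[of \<alpha> K] sqrtF_sum[of K] unfolding K2 by simp
  qed
  also have "\<dots> \<le> 18 * sqrt (26 * z)"
  proof -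
    have "real (F (k + 4)) \<le> 13 * real (F k')" using F_growth5[OF k'(3)] k_def
      by (simp add: numeral_eq_Suc)
    also have "\<dots> \<le> 26 * z" using k'(1) z by simp
    finally show ?thesis by simp
  qed
  also have "\<dots> \<le> 108 * sqrt z"
  proof -
    have "sqrt (26 * z) = sqrt 26 * sqrt z" by (simp add: real_sqrt_mult)
    moreover have "sqrt 26 \<le> 6" by (rule real_le_lsqrt) auto
    ultimately show ?thesis using z by (simp add: mult_right_mono)
  qed
  finally show ?thesis using Hint by simp
qed



definition phi :: real where "phi = (1 + sqrt 5) / 2"

lemma phi_sq: "phi\<^sup>2 = phi + 1"
  unfolding phi_def by (simp add: power2_eq_square algebra_simps)

lemma phi_bounds: "1.6 \<le> phi" "phi \<le> 1.7"
proof -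
  have "2.2 \<le> sqrt (5::real)" by (rule real_le_rsqrt) (simp add: power2_eq_square)
  moreover have "sqrt (5::real) \<le> 2.4" by (rule real_le_lsqrt) (simp_all add: power2_eq_square)
  ultimately show "1.6 \<le> phi" "phi \<le> 1.7" unfolding phi_def by simp_all
qed

lemma F_phi: "phi ^ n \<le> real (F (n + 2)) \<and> phi ^ Suc n \<le> real (F (n + 3))"
proof (induction n)
  case 0
  show ?case using phi_bounds by (simp add: numeral_eq_Suc F_SS)
next
  case (Suc n)
  have "phi ^ Suc (Suc n) = phi ^ n * phi\<^sup>2" by (simp add: power2_eq_square algebra_simps)
  also have "\<dots> = phi ^ Suc n + phi ^ n" using phi_sq by (simp add: algebra_simps)
  finally have "phi ^ Suc (Suc n) = phi ^ Suc n + phi ^ n" .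
  also have "\<dots> \<le> real (F (n + 3)) + real (F (n + 2))" using Suc.IH by simp
  also have "\<dots> = real (F (Suc n + 3))" by (simp add: numeral_eq_Suc F_SS)
  finally show ?case using Suc.IH by (simp add: numeral_eq_Suc)
qed

lemma rho_ok:
  fixes c :: real
  assumes c0: "0 \<le> c" and c2: "c < 2"
  defines "\<rho> \<equiv> phi - (2 - c) / 5"
  shows "c * \<rho> + 1 \<le> \<rho> ^ 3" "1 < \<rho>" "\<rho> < phi"
proof -
  define \<epsilon> where "\<epsilon> = (2 - c) / 5"
  have e0: "0 < \<epsilon>" "\<epsilon> \<le> 0.4" using c0 c2 by (auto simp: \<epsilon>_def)
  have r: "\<rho> = phi - \<epsilon>" "c = 2 - 5 * \<epsilon>" by (simp_all add: \<rho>_def \<epsilon>_def field_simps)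
  have p3: "phi ^ 3 = 2 * phi + 1" using phi_sq by (simp add: power2_eq_square power3_eq_cube algebra_simps)
  have key: "\<rho> ^ 3 - c * \<rho> - 1 = \<epsilon> * (2 * phi - 1 + \<epsilon> * (3 * phi - \<epsilon> - 5))"
  proof -
    have "\<rho> ^ 3 = phi ^ 3 - 3 * phi\<^sup>2 * \<epsilon> + 3 * phi * \<epsilon>\<^sup>2 - \<epsilon> ^ 3"
      unfolding r by (simp add: power2_eq_square power3_eq_cube algebra_simps)
    hence "\<rho> ^ 3 = 2 * phi + 1 - 3 * (phi + 1) * \<epsilon> + 3 * phi * \<epsilon>\<^sup>2 - \<epsilon> ^ 3"
      using p3 phi_sq by simp
    thus ?thesis unfolding r(2) r(1) by (simp add: power2_eq_square power3_eq_cube algebra_simps)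
  qed
  have "-1 \<le> 3 * phi - \<epsilon> - 5" using phi_bounds e0 by simp
  hence "-\<epsilon> \<le> \<epsilon> * (3 * phi - \<epsilon> - 5)" using e0 mult_left_mono[of "-1" "3 * phi - \<epsilon> - 5" \<epsilon>] by simp
  hence "0 \<le> 2 * phi - 1 + \<epsilon> * (3 * phi - \<epsilon> - 5)" using phi_bounds e0 by simp
  hence "0 \<le> \<rho> ^ 3 - c * \<rho> - 1" unfolding key using e0 by simp
  thus "c * \<rho> + 1 \<le> \<rho> ^ 3" by simp
  show "1 < \<rho>" "\<rho> < phi" using r e0 phi_bounds by simp_all
qed

lemma norm_one_plus_e:
  assumes "\<alpha> \<notin> \<int>"
  shows "cmod (1 + e \<alpha>) < 2"
proof -
  have Re: "Re (e \<alpha>) = cos (2 * pi * \<alpha>)" and Im: "Im (e \<alpha>) = sin (2 * pi * \<alpha>)"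
    unfolding e_def by (simp_all add: Re_exp Im_exp)
  have "cos (2 * pi * \<alpha>) \<noteq> 1"
  proof
    assume "cos (2 * pi * \<alpha>) = 1"
    then obtain n :: int where "2 * pi * \<alpha> = real_of_int n * 2 * pi" using cos_one_2pi_int by blast
    hence "\<alpha> = n" by simp
    thus False using assms by simp
  qed
  hence cl: "cos (2 * pi * \<alpha>) < 1" using cos_le_one[of "2 * pi * \<alpha>"] by linarith
  have "(cmod (1 + e \<alpha>))\<^sup>2 = (1 + cos (2 * pi * \<alpha>))\<^sup>2 + (sin (2 * pi * \<alpha>))\<^sup>2"
    by (simp add: cmod_power2 Re Im)
  also have "\<dots> = 2 + 2 * cos (2 * pi * \<alpha>)"
    using sin_cos_squared_add[of "2 * pi * \<alpha>"] by (simp add: power2_eq_square algebra_simps)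
  also have "\<dots> < 2\<^sup>2" using cl by simp
  finally show ?thesis using power2_less_imp_less[of "cmod (1 + e \<alpha>)" 2] by simp
qed

lemma G_rec: "G \<alpha> \<theta> (Suc (Suc (Suc q))) = G \<alpha> \<theta> (Suc (Suc q)) + e (\<alpha> + real (F (Suc (Suc q))) * \<theta>) * G \<alpha> \<theta> (Suc q)"
proof -
  have "G \<alpha> \<theta> (Suc (Suc (Suc q))) = W \<alpha> \<theta> 0 (F (Suc (Suc q))) + W \<alpha> \<theta> (F (Suc (Suc q)) + 0) (F (Suc (Suc q)) + F (Suc q))"
    unfolding G_def using W_split[of 0 "F (Suc (Suc q))" "F (Suc (Suc (Suc q)))"] by (simp add: F_SS[of "Suc q"])
  thus ?thesis using W_shift[of "F (Suc q)" q \<alpha> \<theta> 0] by (simp add: G_def)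
qed

lemma G_le_F: "cmod (G \<alpha> \<theta> j) \<le> real (F j)"
proof -
  have "cmod (G \<alpha> \<theta> j) \<le> (\<Sum>n\<in>{0..<F j}. cmod (ff \<alpha> \<theta> n))" unfolding G_def W_def by (rule norm_sum)
  also have "\<dots> = real (F j)" by (simp add: ff_def)
  finally show ?thesis .
qed

lemma g_bound:
  assumes c: "cmod (1 + e \<alpha>) * \<rho> + 1 \<le> \<rho> ^ 3" and r1: "1 \<le> \<rho>"
  shows "cmod (G \<alpha> 0 j) \<le> 2 * \<rho> ^ j"
proof (induction j rule: less_induct)
  case (less j)
  show ?case
  proof (cases "j \<le> 3")
    case True
    have "F j \<le> F 3" using True by (rule F_mono)
    hence "real (F j) \<le> 2" by (simp add: numeral_eq_Suc F_SS)
    moreover have "1 \<le> \<rho> ^ j" using r1 by simp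
    ultimately show ?thesis using G_le_F[of \<alpha> 0 j] by linarith
  next
    case False
    then obtain q where jq: "j = Suc (Suc (Suc (Suc q)))" using le_Suc_ex[of 4 j] by auto
    let ?w = "e \<alpha>"
    have "G \<alpha> 0 j = (1 + ?w) * G \<alpha> 0 (Suc (Suc q)) + ?w * G \<alpha> 0 (Suc q)"
      using jq G_rec[of \<alpha> 0 "Suc q"] G_rec[of \<alpha> 0 q] by (simp add: algebra_simps)
    hence "cmod (G \<alpha> 0 j) \<le> cmod (1 + ?w) * cmod (G \<alpha> 0 (Suc (Suc q))) + cmod (G \<alpha> 0 (Suc q))"
      by (metis norm_triangle_ineq norm_mult norm_e mult_1)
    also have "\<dots> \<le> cmod (1 + ?w) * (2 * \<rho> ^ Suc (Suc q)) + 2 * \<rho> ^ Suc q"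
      using less.IH[of "Suc (Suc q)"] less.IH[of "Suc q"] jq
      by (intro add_mono mult_left_mono) auto
    also have "\<dots> = 2 * \<rho> ^ Suc q * (cmod (1 + ?w) * \<rho> + 1)" by (simp add: algebra_simps)
    also have "\<dots> \<le> 2 * \<rho> ^ Suc q * \<rho> ^ 3" using c r1 by (intro mult_left_mono) auto
    also have "\<dots> = 2 * \<rho> ^ j" using jq by (simp add: power_add[symmetric] numeral_eq_Suc)
    finally show ?thesis .
  qed
qed

lemma A0_bound:
  assumes c: "cmod (1 + e \<alpha>) * \<rho> + 1 \<le> \<rho> ^ 3" and r1: "1 < \<rho>"
  shows "A \<alpha> 0 K \<le> 2 * \<rho> ^ Suc K / (\<rho> - 1)"
proof -
  have gs: "(\<Sum>i\<le>K. \<rho> ^ i) = (\<rho> ^ Suc K - 1) / (\<rho> - 1)"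
  proof -
    have "(\<Sum>i<Suc K. \<rho> ^ i) = (\<rho> ^ Suc K - 1) / (\<rho> - 1)" by (rule geometric_sum) (use r1 in simp)
    thus ?thesis by (simp only: lessThan_Suc_atMost)
  qed
  have "A \<alpha> 0 K \<le> (\<Sum>i\<le>K. 2 * \<rho> ^ i)" unfolding A_def
    using g_bound[OF c] r1 by (intro sum_mono) auto
  also have "\<dots> = 2 * ((\<rho> ^ Suc K - 1) / (\<rho> - 1))" by (simp add: sum_distrib_left[symmetric] gs)
  also have "\<dots> \<le> 2 * \<rho> ^ Suc K / (\<rho> - 1)" using r1 by (simp add: divide_right_mono)
  finally show ?thesis .
qed

lemma part2:
  assumes a: "\<alpha> \<notin> \<int>"
  shows "\<exists>\<eta>>0. \<exists>C1::real. \<forall>z::real. z \<ge> 1 \<longrightarrow>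
           (SUP x\<in>{0::real..}. cmod (S \<alpha> 0 x z)) \<le> C1 * z powr (1 - \<eta>)"
proof -
  define c where "c = cmod (1 + e \<alpha>)"
  have c2: "c < 2" using norm_one_plus_e[OF a] by (simp add: c_def)
  define \<rho> where "\<rho> = phi - (2 - c) / 5"
  have r: "c * \<rho> + 1 \<le> \<rho> ^ 3" "1 < \<rho>" "\<rho> < phi"
    using rho_ok[of c] c2 unfolding \<rho>_def c_def by auto
  have phi1: "1 < phi" using phi_bounds by simp
  define \<beta> where "\<beta> = ln \<rho> / ln phi"
  have lnp: "0 < ln phi" using phi1 by simp
  have b1: "\<beta> < 1" using r lnp unfolding \<beta>_def by (simp add: divide_less_eq)
  have b0: "0 \<le> \<beta>" using r lnp unfolding \<beta>_def by simp
  have rhopow: "\<rho> ^ t = (phi ^ t) powr \<beta>" for t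
  proof -
    have "(phi ^ t) powr \<beta> = exp (\<beta> * ln (phi ^ t))" using phi1 by (simp add: powr_def)
    also have "\<dots> = exp (real t * ln \<rho>)" using lnp phi1 by (simp add: \<beta>_def ln_realpow)
    also have "\<dots> = \<rho> powr real t" using r by (simp add: powr_def)
    also have "\<dots> = \<rho> ^ t" using r by (simp add: powr_realpow)
    finally show ?thesis by simp
  qed
  define C1 where "C1 = 6 * \<rho> ^ 5 / (\<rho> - 1) * 4 powr \<beta>"
  show ?thesis
  proof (intro exI conjI allI impI)
    show "0 < 1 - \<beta>" using b1 by simp
    fix z :: real assume z: "z \<ge> 1"
    obtain k' where k': "real (F k') < z + 1" "z + 1 \<le> real (F (Suc k'))" "k' \<ge> 1" using choose_k[OF z] by blast
    then obtain t where kt: "k' = Suc t" by (cases k') auto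
    have "(SUP x\<in>{0::real..}. cmod (S \<alpha> 0 x z)) \<le> 3 * A \<alpha> 0 (Suc k' + 2)"
      using SUP_bound[of z "Suc k'"] z k' by simp
    also have "\<dots> \<le> 3 * (2 * \<rho> ^ Suc (Suc k' + 2) / (\<rho> - 1))"
      using A0_bound[of \<alpha> \<rho> "Suc k' + 2"] r c_def by (intro mult_left_mono) auto
    also have "\<dots> = 6 * \<rho> ^ 5 / (\<rho> - 1) * \<rho> ^ t" using kt by (simp add: numeral_eq_Suc)
    also have "\<rho> ^ t \<le> (4 * z) powr \<beta>"
    proof -
      have "phi ^ t \<le> real (F (t + 2))" using F_phi by blast
      also have "\<dots> = real (F (Suc k'))" using kt by simp
      also have "\<dots> \<le> 2 * real (F k')" using F_mono_Suc[of t] kt by (simp add: F_SS)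
      also have "\<dots> \<le> 4 * z" using k'(1) z by simp
      finally have "phi ^ t \<le> 4 * z" .
      thus ?thesis unfolding rhopow using b0 phi1 by (intro powr_mono2) auto
    qed
    hence "6 * \<rho> ^ 5 / (\<rho> - 1) * \<rho> ^ t \<le> 6 * \<rho> ^ 5 / (\<rho> - 1) * (4 * z) powr \<beta>"
      using r by (intro mult_left_mono) auto
    also have "\<dots> = C1 * z powr (1 - (1 - \<beta>))" using z by (simp add: C1_def powr_mult)
    finally show "(SUP x\<in>{0::real..}. cmod (S \<alpha> 0 x z)) \<le> C1 * z powr (1 - (1 - \<beta>))" .
  qed
qed


theorem proposition4:
  shows "\<exists>C::real.
     (\<forall>\<alpha>::real. \<forall>z::real. z \<ge> 1 \<longrightarrow>
        (\<lambda>\<theta>. SUP x\<in>{0::real..}. cmod (S \<alpha> \<theta> x z)) integrable_on {0..1} \<and>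
        integral {0..1} (\<lambda>\<theta>. SUP x\<in>{0::real..}. cmod (S \<alpha> \<theta> x z)) \<le> C * sqrt z)
   \<and> (\<forall>\<alpha>::real. \<alpha> \<notin> \<int> \<longrightarrow>
        (\<exists>\<eta>>0. \<exists>C1::real. \<forall>z::real. z \<ge> 1 \<longrightarrow>
           (SUP x\<in>{0::real..}. cmod (S \<alpha> 0 x z)) \<le> C1 * z powr (1 - \<eta>)))"
proof -
  have P1: "\<forall>\<alpha>::real. \<forall>z::real. z \<ge> 1 \<longrightarrow>
        (\<lambda>\<theta>. SUP x\<in>{0::real..}. cmod (S \<alpha> \<theta> x z)) integrable_on {0..1} \<and>
        integral {0..1} (\<lambda>\<theta>. SUP x\<in>{0::real..}. cmod (S \<alpha> \<theta> x z)) \<le> 108 * sqrt z"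
    using SUP_integrable_bound by blast
  have P2: "\<forall>\<alpha>::real. \<alpha> \<notin> \<int> \<longrightarrow>
        (\<exists>\<eta>>0. \<exists>C1::real. \<forall>z::real. z \<ge> 1 \<longrightarrow>
           (SUP x\<in>{0::real..}. cmod (S \<alpha> 0 x z)) \<le> C1 * z powr (1 - \<eta>))"
    using part2 by blast
  show ?thesis by (rule exI[of _ 108]) (use P1 P2 in blast)
qed

end
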